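(* Let $X$ be a Baire space and $\sigma : X\to X$ a homeomorphism, inducing the automorphism $\widetilde{\sigma}(f) = f\circ\sigma^{-1}$ of $C(X)$. Let $A$ be a subalgebra of $C(X)$ invariant under $\widetilde{\sigma}$ and $\widetilde{\sigma}^{-1}$, which separates the points of $X$ and is such that for every non-empty open set $U\subseteq X$ there is a non-zero $f\in A$ vanishing on $X\setminus U$. Then $A$ is a maximal abelian subalgebra of $A\rtimes_{\widetilde{\sigma}}\mathbb{Z}$ if and only if the set $\mathrm{Per}^\infty(X) = \{x\in X : \sigma^n(x)\neq x \text{ for all } n\in\mathbb{Z}\setminus\{0\}\}$ of non-periodic points is dense in $X$.
   Context: $C(X)$ is the algebra of continuous complex-valued functions on $X$. The crossed product $A \rtimes_{\widetilde{\sigma}} \mathbb{Z}$ is the set of finitely supported functions $\mathbb{Z}\to A$, written $\sum_n f_n\delta^n$, with pointwise linear operations and multiplication determined by $(f_n\delta^n)*(g_m\delta^m)=f_n\,\widetilde{\sigma}^n(g_m)\,\delta^{n+m}$; $A$ is embedded as $\{f_0\delta^0\}$. *)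

theory Defs
  imports "HOL-Analysis.Analysis"
begin

text \<open>The space X is the whole type 'a (a topological space).
  Baire space: every countable intersection of open dense subsets is dense.\<close>
definition baire_space :: "'a::topological_space itself \<Rightarrow> bool" where
  "baire_space _ \<longleftrightarrow>
     (\<forall>G :: nat \<Rightarrow> 'a set. (\<forall>n. open (G n) \<and> closure (G n) = UNIV)
        \<longrightarrow> closure (\<Inter>n. G n) = UNIV)"

definition ipow :: "('a \<Rightarrow> 'a) \<Rightarrow> ('a \<Rightarrow> 'a) \<Rightarrow> int \<Rightarrow> 'a \<Rightarrow> 'a" where
  "ipow \<sigma> \<tau> n = (if n \<ge> 0 then \<sigma> ^^ nat n else \<tau> ^^ nat (- n))"

definition sigtil_pow :: "('a \<Rightarrow> 'a) \<Rightarrow> ('a \<Rightarrow> 'a) \<Rightarrow> int \<Rightarrow> ('a \<Rightarrow> complex) \<Rightarrow> ('a \<Rightarrow> complex)" where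
  "sigtil_pow \<sigma> \<tau> n f = f \<circ> ipow \<sigma> \<tau> (- n)"

definition CX :: "('a::topological_space \<Rightarrow> complex) set" where
  "CX = {f. continuous_on UNIV f}"

definition is_subalgebra_CX :: "('a::topological_space \<Rightarrow> complex) set \<Rightarrow> bool" where
  "is_subalgebra_CX A \<longleftrightarrow> A \<subseteq> CX \<and> (\<lambda>x. 0) \<in> A
     \<and> (\<forall>f\<in>A. \<forall>g\<in>A. (\<lambda>x. f x + g x) \<in> A)
     \<and> (\<forall>c::complex. \<forall>f\<in>A. (\<lambda>x. c * f x) \<in> A)
     \<and> (\<forall>f\<in>A. \<forall>g\<in>A. (\<lambda>x. f x * g x) \<in> A)"

definition crossed_product :: "('a \<Rightarrow> complex) set \<Rightarrow> (int \<Rightarrow> 'a \<Rightarrow> complex) set" where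
  "crossed_product A = {F. finite {n. F n \<noteq> (\<lambda>x. 0)} \<and> (\<forall>n. F n \<in> A)}"

text \<open>Multiplication: (f_n delta^n)*(g_m delta^m) = f_n sigma~^n(g_m) delta^(n+m), extended bilinearly.\<close>
definition cp_mult :: "('a \<Rightarrow> 'a) \<Rightarrow> ('a \<Rightarrow> 'a) \<Rightarrow> (int \<Rightarrow> 'a \<Rightarrow> complex) \<Rightarrow> (int \<Rightarrow> 'a \<Rightarrow> complex)
    \<Rightarrow> (int \<Rightarrow> 'a \<Rightarrow> complex)" where
  "cp_mult \<sigma> \<tau> F G = (\<lambda>k x. \<Sum>n\<in>{n. F n \<noteq> (\<lambda>x. 0)}. F n x * sigtil_pow \<sigma> \<tau> n (G (k - n)) x)"

definition cp_embed :: "('a \<Rightarrow> complex) \<Rightarrow> (int \<Rightarrow> 'a \<Rightarrow> complex)" where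
  "cp_embed f = (\<lambda>n. if n = 0 then f else (\<lambda>x. 0))"

definition cp_subalgebra :: "('a \<Rightarrow> 'a) \<Rightarrow> ('a \<Rightarrow> 'a) \<Rightarrow> ('a \<Rightarrow> complex) set
    \<Rightarrow> (int \<Rightarrow> 'a \<Rightarrow> complex) set \<Rightarrow> bool" where
  "cp_subalgebra \<sigma> \<tau> A B \<longleftrightarrow> B \<subseteq> crossed_product A \<and> (\<lambda>n x. 0) \<in> B
     \<and> (\<forall>F\<in>B. \<forall>G\<in>B. (\<lambda>n x. F n x + G n x) \<in> B)
     \<and> (\<forall>c::complex. \<forall>F\<in>B. (\<lambda>n x. c * F n x) \<in> B)
     \<and> (\<forall>F\<in>B. \<forall>G\<in>B. cp_mult \<sigma> \<tau> F G \<in> B)"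

definition cp_commutative :: "('a \<Rightarrow> 'a) \<Rightarrow> ('a \<Rightarrow> 'a) \<Rightarrow> (int \<Rightarrow> 'a \<Rightarrow> complex) set \<Rightarrow> bool" where
  "cp_commutative \<sigma> \<tau> B \<longleftrightarrow> (\<forall>F\<in>B. \<forall>G\<in>B. cp_mult \<sigma> \<tau> F G = cp_mult \<sigma> \<tau> G F)"

definition maximal_abelian :: "('a \<Rightarrow> 'a) \<Rightarrow> ('a \<Rightarrow> 'a) \<Rightarrow> ('a \<Rightarrow> complex) set
    \<Rightarrow> (int \<Rightarrow> 'a \<Rightarrow> complex) set \<Rightarrow> bool" where
  "maximal_abelian \<sigma> \<tau> A B \<longleftrightarrow> cp_subalgebra \<sigma> \<tau> A B \<and> cp_commutative \<sigma> \<tau> B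
     \<and> (\<forall>C. cp_subalgebra \<sigma> \<tau> A C \<and> cp_commutative \<sigma> \<tau> C \<and> B \<subseteq> C \<longrightarrow> C = B)"

definition Per_inf :: "('a \<Rightarrow> 'a) \<Rightarrow> ('a \<Rightarrow> 'a) \<Rightarrow> 'a set" where
  "Per_inf \<sigma> \<tau> = {x. \<forall>n::int. n \<noteq> 0 \<longrightarrow> ipow \<sigma> \<tau> n x \<noteq> x}"

end

theory Submission
  imports Defs
begin

lemma ipow_0: "ipow \<sigma> \<tau> 0 = id"
  by (simp add: ipow_def)

lemma ipow_succ:
  assumes st: "\<And>x. \<sigma> (\<tau> x) = x"
  shows "ipow \<sigma> \<tau> (n+1) = \<sigma> \<circ> ipow \<sigma> \<tau> n"
proof (cases "n \<ge> 0")
  case True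
  then have "nat (n+1) = Suc (nat n)" by simp
  then show ?thesis using True by (simp add: ipow_def)
next
  case False
  show ?thesis
  proof (cases "n = -1")
    case True
    then show ?thesis by (simp add: ipow_def fun_eq_iff st)
  next
    case F2: False
    then have eq: "nat (-n) = Suc (nat (-(n+1)))" using False by simp
    have e: "\<tau> ^^ nat (-n) = \<tau> \<circ> \<tau> ^^ nat (-(n+1))"
      unfolding eq by (simp only: funpow.simps(2))
    have a: "ipow \<sigma> \<tau> n = \<tau> ^^ nat (-n)" using False by (simp add: ipow_def)
    have b: "ipow \<sigma> \<tau> (n+1) = \<tau> ^^ nat (-(n+1))" using False F2 by (simp add: ipow_def)
    show ?thesis unfolding a b e by (simp add: fun_eq_iff st)
  qed
qed

lemma ipow_pred:
  assumes ts: "\<And>x. \<tau> (\<sigma> x) = x"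
  shows "ipow \<sigma> \<tau> (n-1) = \<tau> \<circ> ipow \<sigma> \<tau> n"
proof (cases "n \<le> 0")
  case True
  then have "nat (-(n-1)) = Suc (nat (-n))" by simp
  then show ?thesis using True by (simp add: ipow_def)
next
  case False
  show ?thesis
  proof (cases "n = 1")
    case True
    then show ?thesis by (simp add: ipow_def fun_eq_iff ts)
  next
    case F2: False
    then have eq: "nat n = Suc (nat (n-1))" using False by simp
    have e: "\<sigma> ^^ nat n = \<sigma> \<circ> \<sigma> ^^ nat (n-1)"
      unfolding eq by (simp only: funpow.simps(2))
    have a: "ipow \<sigma> \<tau> n = \<sigma> ^^ nat n" using False by (simp add: ipow_def)
    have b: "ipow \<sigma> \<tau> (n-1) = \<sigma> ^^ nat (n-1)" using False F2 by (simp add: ipow_def)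
    show ?thesis unfolding a b e by (simp add: fun_eq_iff ts)
  qed
qed

lemma ipow_add:
  assumes st: "\<And>x. \<sigma> (\<tau> x) = x" and ts: "\<And>x. \<tau> (\<sigma> x) = x"
  shows "ipow \<sigma> \<tau> (a+b) = ipow \<sigma> \<tau> a \<circ> ipow \<sigma> \<tau> b"
proof (induction a rule: int_induct[where k=0])
  case base
  then show ?case by (simp add: ipow_0)
next
  case (step1 i)
  have "ipow \<sigma> \<tau> (i + 1 + b) = ipow \<sigma> \<tau> ((i + b) + 1)" by (simp add: algebra_simps)
  also have "\<dots> = \<sigma> \<circ> ipow \<sigma> \<tau> (i + b)" by (rule ipow_succ[where \<sigma>=\<sigma> and \<tau>=\<tau>, OF st])
  finally show ?case by (simp only: step1 ipow_succ[where \<sigma>=\<sigma> and \<tau>=\<tau>, OF st, of i] comp_assoc)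
next
  case (step2 i)
  have "ipow \<sigma> \<tau> (i - 1 + b) = ipow \<sigma> \<tau> ((i + b) - 1)" by (simp add: algebra_simps)
  also have "\<dots> = \<tau> \<circ> ipow \<sigma> \<tau> (i + b)" by (rule ipow_pred[where \<sigma>=\<sigma> and \<tau>=\<tau>, OF ts])
  finally show ?case by (simp only: step2 ipow_pred[where \<sigma>=\<sigma> and \<tau>=\<tau>, OF ts, of i] comp_assoc)
qed

lemma ipow_add_pt:
  assumes st: "\<And>x. \<sigma> (\<tau> x) = x" and ts: "\<And>x. \<tau> (\<sigma> x) = x"
  shows "ipow \<sigma> \<tau> (a+b) x = ipow \<sigma> \<tau> a (ipow \<sigma> \<tau> b x)"
  using ipow_add[OF st ts] by simp

lemma sigtil_0: "sigtil_pow \<sigma> \<tau> 0 g = g"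
  by (simp add: sigtil_pow_def ipow_0)

lemma sigtil_zero: "sigtil_pow \<sigma> \<tau> n (\<lambda>x. 0) = (\<lambda>x. 0)"
  by (simp add: sigtil_pow_def comp_def)

lemma sigtil_A:
  assumes st: "\<And>x. \<sigma> (\<tau> x) = x" and ts: "\<And>x. \<tau> (\<sigma> x) = x"
    and p1: "\<forall>f\<in>A. sigtil_pow \<sigma> \<tau> 1 f \<in> A"
    and m1: "\<forall>f\<in>A. sigtil_pow \<sigma> \<tau> (-1) f \<in> A"
    and f: "f \<in> A"
  shows "sigtil_pow \<sigma> \<tau> m f \<in> A"
proof (induction m rule: int_induct[where k=0])
  case base
  then show ?case using f by (simp add: sigtil_0)
next
  case (step1 i)
  have "sigtil_pow \<sigma> \<tau> (i+1) f = sigtil_pow \<sigma> \<tau> 1 (sigtil_pow \<sigma> \<tau> i f)"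
  proof -
    have "- (i+1) = -i + -1" by simp
    then show ?thesis unfolding sigtil_pow_def
      by (simp only: ipow_add[OF st ts, of "-i" "-1"] comp_assoc)
  qed
  then show ?case using step1 p1 by simp
next
  case (step2 i)
  have "sigtil_pow \<sigma> \<tau> (i-1) f = sigtil_pow \<sigma> \<tau> (-1) (sigtil_pow \<sigma> \<tau> i f)"
  proof -
    have "- (i-1) = -i + 1" by simp
    then show ?thesis unfolding sigtil_pow_def
      by (simp only: ipow_add[OF st ts, of "-i" "1"] comp_assoc minus_minus)
  qed
  then show ?case using step2 m1 by simp
qed

lemma sum_in_A:
  assumes sub: "is_subalgebra_CX A" and fin: "finite S" and h: "\<forall>m\<in>S. \<phi> m \<in> A"
  shows "(\<lambda>x. \<Sum>m\<in>S. \<phi> m x) \<in> A"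
  using fin h
proof (induction S rule: finite_induct)
  case empty
  then show ?case using sub by (simp add: is_subalgebra_CX_def)
next
  case (insert a F)
  have add: "\<forall>f\<in>A. \<forall>g\<in>A. (\<lambda>x. f x + g x) \<in> A"
    using sub unfolding is_subalgebra_CX_def by (elim conjE)
  have "\<phi> a \<in> A" using insert.prems by simp
  moreover have "(\<lambda>x. \<Sum>m\<in>F. \<phi> m x) \<in> A" using insert.IH insert.prems by simp
  ultimately have "(\<lambda>x. \<phi> a x + (\<Sum>m\<in>F. \<phi> m x)) \<in> A"
    using add[rule_format, of "\<phi> a" "\<lambda>x. \<Sum>m\<in>F. \<phi> m x"] by simp
  moreover have "(\<lambda>x. \<Sum>m\<in>insert a F. \<phi> m x) = (\<lambda>x. \<phi> a x + (\<Sum>m\<in>F. \<phi> m x))"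
    using insert.hyps by (simp add: sum.insert)
  ultimately show ?case by simp
qed

lemma cp_mult_in_A:
  assumes sub: "is_subalgebra_CX A"
    and st: "\<And>x. \<sigma> (\<tau> x) = x" and ts: "\<And>x. \<tau> (\<sigma> x) = x"
    and p1: "\<forall>f\<in>A. sigtil_pow \<sigma> \<tau> 1 f \<in> A"
    and m1: "\<forall>f\<in>A. sigtil_pow \<sigma> \<tau> (-1) f \<in> A"
    and F: "F \<in> crossed_product A" and G: "G \<in> crossed_product A"
  shows "cp_mult \<sigma> \<tau> F G k \<in> A"
proof -
  have fin: "finite {n. F n \<noteq> (\<lambda>x. 0)}" using F by (simp add: crossed_product_def)
  have mul: "\<forall>f\<in>A. \<forall>g\<in>A. (\<lambda>x. f x * g x) \<in> A"
    using sub unfolding is_subalgebra_CX_def by (elim conjE)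
  have "\<forall>n\<in>{n. F n \<noteq> (\<lambda>x. 0)}. (\<lambda>x. F n x * sigtil_pow \<sigma> \<tau> n (G (k-n)) x) \<in> A"
  proof
    fix n
    have "F n \<in> A" using F by (simp add: crossed_product_def)
    moreover have "sigtil_pow \<sigma> \<tau> n (G (k-n)) \<in> A"
      using G sigtil_A[OF st ts p1 m1] by (simp add: crossed_product_def)
    ultimately show "(\<lambda>x. F n x * sigtil_pow \<sigma> \<tau> n (G (k-n)) x) \<in> A" using mul by blast
  qed
  from sum_in_A[OF sub fin this] show ?thesis unfolding cp_mult_def by simp
qed

lemma cp_mult_supp:
  assumes F: "F \<in> crossed_product A" and G: "G \<in> crossed_product A"
  shows "finite {k. cp_mult \<sigma> \<tau> F G k \<noteq> (\<lambda>x. 0)}"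
proof -
  let ?SF = "{n. F n \<noteq> (\<lambda>x. 0)}"
  let ?SG = "{n. G n \<noteq> (\<lambda>x. 0)}"
  have f1: "finite ?SF" using F by (simp add: crossed_product_def)
  have f2: "finite ?SG" using G by (simp add: crossed_product_def)
  have "{k. cp_mult \<sigma> \<tau> F G k \<noteq> (\<lambda>x. 0)} \<subseteq> (\<lambda>(m,j). m+j) ` (?SF \<times> ?SG)"
  proof
    fix k assume "k \<in> {k. cp_mult \<sigma> \<tau> F G k \<noteq> (\<lambda>x. 0)}"
    then obtain x where "cp_mult \<sigma> \<tau> F G k x \<noteq> 0" by (auto simp: fun_eq_iff)
    then have "(\<Sum>n\<in>?SF. F n x * sigtil_pow \<sigma> \<tau> n (G (k-n)) x) \<noteq> 0"
      by (simp add: cp_mult_def)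
    then obtain m where m: "m \<in> ?SF" "F m x * sigtil_pow \<sigma> \<tau> m (G (k-m)) x \<noteq> 0"
      using sum.not_neutral_contains_not_neutral by blast
    have "G (k-m) \<noteq> (\<lambda>x. 0)"
    proof
      assume "G (k-m) = (\<lambda>x. 0)"
      then show False using m(2) by (simp add: sigtil_zero)
    qed
    then show "k \<in> (\<lambda>(m,j). m+j) ` (?SF \<times> ?SG)"
      using m(1) by (intro rev_image_eqI[of "(m, k-m)"]) auto
  qed
  then show ?thesis using f1 f2 by (meson finite_SigmaI finite_imageI finite_subset)
qed

lemma cp_mult_cp:
  assumes sub: "is_subalgebra_CX A"
    and st: "\<And>x. \<sigma> (\<tau> x) = x" and ts: "\<And>x. \<tau> (\<sigma> x) = x"
    and p1: "\<forall>f\<in>A. sigtil_pow \<sigma> \<tau> 1 f \<in> A"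
    and m1: "\<forall>f\<in>A. sigtil_pow \<sigma> \<tau> (-1) f \<in> A"
    and F: "F \<in> crossed_product A" and G: "G \<in> crossed_product A"
  shows "cp_mult \<sigma> \<tau> F G \<in> crossed_product A"
  using cp_mult_supp[OF F G] cp_mult_in_A[OF sub st ts p1 m1 F G]
  unfolding crossed_product_def by blast

lemma mult_embed_right:
  assumes fin: "finite {n. F n \<noteq> (\<lambda>x. 0)}"
  shows "cp_mult \<sigma> \<tau> F (cp_embed a) k x = F k x * a (ipow \<sigma> \<tau> (-k) x)"
proof -
  let ?S = "{n. F n \<noteq> (\<lambda>x. 0)}"
  define c where "c = F k x * a (ipow \<sigma> \<tau> (-k) x)"
  have "cp_mult \<sigma> \<tau> F (cp_embed a) k x
      = (\<Sum>n\<in>?S. if n = k then c else 0)"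
    unfolding cp_mult_def c_def by (rule sum.cong) (auto simp: cp_embed_def sigtil_pow_def)
  also have "\<dots> = (if k \<in> ?S then c else 0)"
    by (rule sum.delta[OF fin, of k "\<lambda>_. c"])
  also have "\<dots> = F k x * a (ipow \<sigma> \<tau> (-k) x)" by (auto simp: c_def)
  finally show ?thesis .
qed

lemma mult_embed_left:
  "cp_mult \<sigma> \<tau> (cp_embed a) G k x = a x * G k x"
proof (cases "a = (\<lambda>x. 0)")
  case True
  then have "{n. cp_embed a n \<noteq> (\<lambda>x. 0)} = {}" by (auto simp: cp_embed_def)
  then show ?thesis using True by (simp add: cp_mult_def)
next
  case False
  then have "{n. cp_embed a n \<noteq> (\<lambda>x. 0)} = {0}" by (auto simp: cp_embed_def)
  then show ?thesis by (simp add: cp_mult_def cp_embed_def sigtil_0)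
qed

lemma embed_mult:
  "cp_mult \<sigma> \<tau> (cp_embed f) (cp_embed g) = cp_embed (\<lambda>x. f x * g x)"
  by (rule ext, rule ext) (simp only: mult_embed_left, simp add: cp_embed_def)

lemma funpow_cont:
  assumes "continuous_on UNIV (g :: 'a::topological_space \<Rightarrow> 'a)"
  shows "continuous_on UNIV (g ^^ k)"
proof (induction k)
  case 0
  then show ?case by (simp add: continuous_on_id)
next
  case (Suc k)
  have "continuous_on UNIV (\<lambda>x. g ((g ^^ k) x))"
    by (rule continuous_on_compose2[OF assms Suc]) simp
  then show ?case by (simp add: comp_def)
qed

lemma ipow_cont:
  assumes "continuous_on UNIV (\<sigma> :: 'a::topological_space \<Rightarrow> 'a)" "continuous_on UNIV \<tau>"
  shows "continuous_on UNIV (ipow \<sigma> \<tau> n)"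
  unfolding ipow_def using funpow_cont[OF assms(1)] funpow_cont[OF assms(2)] by simp

lemma fix_closed:
  fixes A :: "('a::topological_space \<Rightarrow> complex) set"
  assumes sep: "\<forall>x y. x \<noteq> y \<longrightarrow> (\<exists>f\<in>A. f x \<noteq> f y)" and AC: "A \<subseteq> CX"
    and g: "continuous_on UNIV (g :: 'a::topological_space \<Rightarrow> 'a)"
  shows "closed {x. g x = x}"
proof -
  have "open (- {x. g x = x})"
    unfolding open_subopen[of "- {x. g x = x}"]
  proof (intro ballI)
    fix t assume "t \<in> - {x. g x = x}"
    then obtain f where f: "f \<in> A" "f (g t) \<noteq> f t" using sep by auto
    have cf: "continuous_on UNIV f" using f(1) AC by (auto simp: CX_def)
    have "continuous_on UNIV (\<lambda>x. f (g x))"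
      by (rule continuous_on_compose2[OF cf g]) simp
    then have "open {x. f (g x) \<noteq> f x}" using cf by (rule open_Collect_neq)
    moreover have "{x. f (g x) \<noteq> f x} \<subseteq> - {x. g x = x}" by auto
    ultimately show "\<exists>T. open T \<and> t \<in> T \<and> T \<subseteq> - {x. g x = x}" using f(2) by blast
  qed
  then show ?thesis by (simp add: closed_def)
qed

lemma zero_dense:
  fixes f :: "'a::topological_space \<Rightarrow> complex"
  assumes "continuous_on UNIV f" "closure S = UNIV" "\<forall>x\<in>S. f x = 0"
  shows "f x = 0"
proof -
  have "closed {x. f x = 0}" using closed_Collect_eq[OF assms(1) continuous_on_const] by simp
  moreover have "S \<subseteq> {x. f x = 0}" using assms(3) by auto
  ultimately have "closure S \<subseteq> {x. f x = 0}" by (rule closure_minimal[rotated])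
  then show ?thesis using assms(2) by auto
qed

lemma baire_cover:
  fixes F :: "nat \<Rightarrow> 'a::topological_space set"
  assumes b: "baire_space TYPE('a)" and cl: "\<forall>k. closed (F k)" and U: "open U" "U \<noteq> {}"
    and cov: "U \<subseteq> (\<Union>k. F k)"
  shows "\<exists>k V. open V \<and> V \<noteq> {} \<and> V \<subseteq> F k"
proof (rule ccontr)
  assume nt: "\<not> ?thesis"
  have int: "interior (F k) = {}" for k
  proof (rule ccontr)
    assume "interior (F k) \<noteq> {}"
    then show False using nt open_interior interior_subset by blast
  qed
  have G: "\<forall>k. open (- F k) \<and> closure (- F k) = UNIV"
  proof
    fix k
    have "open (- F k)" using cl by (simp add: open_Compl)
    moreover have "closure (- F k) = UNIV" by (simp only: closure_interior double_compl int) simp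
    ultimately show "open (- F k) \<and> closure (- F k) = UNIV" ..
  qed
  have "closure (\<Inter>k. - F k) = UNIV"
    using b[unfolded baire_space_def, rule_format, of "\<lambda>k. - F k"] G by simp
  moreover have "U \<inter> (\<Inter>k. - F k) = {}" using cov by auto
  ultimately have "U \<inter> UNIV = {}" using open_Int_closure_eq_empty[OF U(1), of "\<Inter>k. - F k"] by simp
  then show False using U(2) by simp
qed

lemma conv_form:
  fixes G H :: "int \<Rightarrow> 'a \<Rightarrow> complex"
  assumes "\<forall>m x. G m x \<noteq> 0 \<longrightarrow> ipow \<sigma> \<tau> (-m) x = x"
  shows "cp_mult \<sigma> \<tau> G H k x = (\<Sum>m\<in>{m. G m \<noteq> (\<lambda>x. 0)}. G m x * H (k-m) x)"
  unfolding cp_mult_def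
proof (rule sum.cong)
  fix m
  show "G m x * sigtil_pow \<sigma> \<tau> m (H (k - m)) x = G m x * H (k - m) x"
  proof (cases "G m x = 0")
    case True
    then show ?thesis by simp
  next
    case False
    then have "ipow \<sigma> \<tau> (-m) x = x" using assms by blast
    then show ?thesis by (simp add: sigtil_pow_def)
  qed
qed simp

lemma conv_comm:
  fixes G H :: "int \<Rightarrow> 'a \<Rightarrow> complex"
  assumes f1: "finite {m. G m \<noteq> (\<lambda>x. 0)}" and f2: "finite {m. H m \<noteq> (\<lambda>x. 0)}"
  shows "(\<Sum>m\<in>{m. G m \<noteq> (\<lambda>x. 0)}. G m x * H (k-m) x)
       = (\<Sum>m\<in>{m. H m \<noteq> (\<lambda>x. 0)}. H m x * G (k-m) x)"
proof -
  let ?SG = "{m. G m \<noteq> (\<lambda>x. 0)}"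
  let ?SH = "{m. H m \<noteq> (\<lambda>x. 0)}"
  let ?I = "(\<lambda>j. k - j) ` ?SH"
  let ?T = "?SG \<union> ?I"
  have fT: "finite ?T" using f1 f2 by simp
  have 1: "(\<Sum>m\<in>?SG. G m x * H (k-m) x) = (\<Sum>m\<in>?T. G m x * H (k-m) x)"
  proof (rule sum.mono_neutral_left[OF fT])
    show "?SG \<subseteq> ?T" by blast
    show "\<forall>i\<in>?T - ?SG. G i x * H (k - i) x = 0"
    proof
      fix i assume "i \<in> ?T - ?SG"
      then have "G i = (\<lambda>x. 0)" by blast
      then show "G i x * H (k - i) x = 0" by simp
    qed
  qed
  have 2: "(\<Sum>m\<in>?SH. H m x * G (k-m) x) = (\<Sum>m\<in>?I. G m x * H (k-m) x)"
  proof -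
    have inj: "inj_on (\<lambda>j. k - j) ?SH" by (auto simp: inj_on_def)
    show ?thesis unfolding sum.reindex[OF inj] comp_def
      by (rule sum.cong) (simp_all add: mult.commute)
  qed
  have 3: "(\<Sum>m\<in>?I. G m x * H (k-m) x) = (\<Sum>m\<in>?T. G m x * H (k-m) x)"
  proof (rule sum.mono_neutral_left[OF fT])
    show "?I \<subseteq> ?T" by blast
    show "\<forall>i\<in>?T - ?I. G i x * H (k - i) x = 0"
    proof
      fix i assume "i \<in> ?T - ?I"
      then have "k - i \<notin> ?SH"
      proof -
        assume iT: "i \<in> ?T - ?I"
        show "k - i \<notin> ?SH"
        proof
          assume "k - i \<in> ?SH"
          then have "k - (k - i) \<in> ?I" by blast
          then show False using iT by simp
        qed
      qed
      then show "G i x * H (k - i) x = 0" by simp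
    qed
  qed
  show ?thesis using 1 2 3 by simp
qed

theorem theorem3p7:
  fixes \<sigma> \<tau> :: "'a::topological_space \<Rightarrow> 'a"
    and A :: "('a \<Rightarrow> complex) set"
  assumes "baire_space TYPE('a)"
    and "homeomorphism UNIV UNIV \<sigma> \<tau>"
    and "is_subalgebra_CX A"
    and "\<forall>f\<in>A. sigtil_pow \<sigma> \<tau> 1 f \<in> A"
    and "\<forall>f\<in>A. sigtil_pow \<sigma> \<tau> (-1) f \<in> A"
    and "\<forall>x y. x \<noteq> y \<longrightarrow> (\<exists>f\<in>A. f x \<noteq> f y)"
    and "\<forall>U. open U \<and> U \<noteq> {} \<longrightarrow>
           (\<exists>f\<in>A. f \<noteq> (\<lambda>x. 0) \<and> (\<forall>x\<in>UNIV - U. f x = 0))"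
  shows "maximal_abelian \<sigma> \<tau> A (cp_embed ` A) \<longleftrightarrow> closure (Per_inf \<sigma> \<tau>) = UNIV"
proof -
  note sub = assms(3) and p1 = assms(4) and m1 = assms(5) and sep = assms(6)
  have st: "\<And>x. \<sigma> (\<tau> x) = x" and ts: "\<And>x. \<tau> (\<sigma> x) = x"
    and cs: "continuous_on UNIV \<sigma>" and ct: "continuous_on UNIV \<tau>"
    using assms(2) by (simp_all add: homeomorphism_def)
  have AC: "A \<subseteq> CX" and zA: "(\<lambda>x. 0) \<in> A"
    and addA: "\<forall>f\<in>A. \<forall>g\<in>A. (\<lambda>x. f x + g x) \<in> A"
    and smulA: "\<forall>c::complex. \<forall>f\<in>A. (\<lambda>x. c * f x) \<in> A"
    and mulA: "\<forall>f\<in>A. \<forall>g\<in>A. (\<lambda>x. f x * g x) \<in> A"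
    using sub unfolding is_subalgebra_CX_def by simp_all
  have emb_cp: "cp_embed a \<in> crossed_product A" if "a \<in> A" for a
  proof -
    have "{n. cp_embed a n \<noteq> (\<lambda>x. 0)} \<subseteq> {0}" by (auto simp: cp_embed_def)
    then have "finite {n. cp_embed a n \<noteq> (\<lambda>x. 0)}" by (rule finite_subset) simp
    then show ?thesis using that zA by (simp add: crossed_product_def cp_embed_def)
  qed
  have emb_sub: "cp_subalgebra \<sigma> \<tau> A (cp_embed ` A)"
    unfolding cp_subalgebra_def
  proof (intro conjI ballI allI)
    show "cp_embed ` A \<subseteq> crossed_product A" using emb_cp by blast
    have e: "(\<lambda>n x. 0) = cp_embed (\<lambda>x. 0::complex)" by (auto simp: cp_embed_def fun_eq_iff)
    show "(\<lambda>n x. 0) \<in> cp_embed ` A" using zA e by (metis image_eqI)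
  next
    fix F G assume "F \<in> cp_embed ` A" "G \<in> cp_embed ` A"
    then obtain f g where fg: "f \<in> A" "g \<in> A" "F = cp_embed f" "G = cp_embed g" by blast
    have "(\<lambda>n x. F n x + G n x) = cp_embed (\<lambda>x. f x + g x)"
      using fg by (auto simp: cp_embed_def fun_eq_iff)
    moreover have "(\<lambda>x. f x + g x) \<in> A" by (rule addA[rule_format, OF fg(1) fg(2)])
    ultimately show "(\<lambda>n x. F n x + G n x) \<in> cp_embed ` A" by (rule image_eqI)
    have "cp_mult \<sigma> \<tau> F G = cp_embed (\<lambda>x. f x * g x)" using fg by (simp add: embed_mult)
    moreover have "(\<lambda>x. f x * g x) \<in> A" by (rule mulA[rule_format, OF fg(1) fg(2)])
    ultimately show "cp_mult \<sigma> \<tau> F G \<in> cp_embed ` A" by (rule image_eqI)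
  next
    fix c :: complex and F assume "F \<in> cp_embed ` A"
    then obtain f where f: "f \<in> A" "F = cp_embed f" by blast
    have "(\<lambda>n x. c * F n x) = cp_embed (\<lambda>x. c * f x)"
      using f by (auto simp: cp_embed_def fun_eq_iff)
    moreover have "(\<lambda>x. c * f x) \<in> A" by (rule smulA[rule_format, OF f(1)])
    ultimately show "(\<lambda>n x. c * F n x) \<in> cp_embed ` A" by (rule image_eqI)
  qed
  have emb_comm: "cp_commutative \<sigma> \<tau> (cp_embed ` A)"
    unfolding cp_commutative_def
  proof (intro ballI)
    fix F G assume "F \<in> cp_embed ` A" "G \<in> cp_embed ` A"
    then obtain f g where fg: "F = cp_embed f" "G = cp_embed g" by blast
    show "cp_mult \<sigma> \<tau> F G = cp_mult \<sigma> \<tau> G F"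
      unfolding fg embed_mult by (simp add: mult.commute)
  qed
  show ?thesis
  proof
    assume max: "maximal_abelian \<sigma> \<tau> A (cp_embed ` A)"
    show "closure (Per_inf \<sigma> \<tau>) = UNIV"
    proof (rule ccontr)
      assume nd: "closure (Per_inf \<sigma> \<tau>) \<noteq> UNIV"
      define U where "U = - closure (Per_inf \<sigma> \<tau>)"
      have oU: "open U" "U \<noteq> {}" using nd by (auto simp: U_def)
      define Fk where "Fk k = {x. ipow \<sigma> \<tau> (int (Suc k)) x = x}" for k
      have clF: "\<forall>k. closed (Fk k)"
        unfolding Fk_def by (intro allI fix_closed[OF sep AC ipow_cont[OF cs ct]])
      have cov: "U \<subseteq> (\<Union>k. Fk k)"
      proof
        fix x assume "x \<in> U"
        then have "x \<notin> Per_inf \<sigma> \<tau>" using closure_subset by (auto simp: U_def)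
        then obtain n where n: "n \<noteq> 0" "ipow \<sigma> \<tau> n x = x" by (auto simp: Per_inf_def)
        show "x \<in> (\<Union>k. Fk k)"
        proof (cases "n > 0")
          case True
          then have e: "int (Suc (nat n - 1)) = n" by simp
          have "x \<in> Fk (nat n - 1)" unfolding Fk_def using n(2) by (simp only: e mem_Collect_eq)
          then show ?thesis by blast
        next
          case False
          then have e: "int (Suc (nat (-n) - 1)) = -n" using n by simp
          have "ipow \<sigma> \<tau> (-n) x = ipow \<sigma> \<tau> (-n) (ipow \<sigma> \<tau> n x)" using n by simp
          also have "\<dots> = ipow \<sigma> \<tau> (-n + n) x" by (rule ipow_add_pt[OF st ts, symmetric])
          also have "\<dots> = x" by (simp add: ipow_0)
          finally have "x \<in> Fk (nat (-n) - 1)" unfolding Fk_def by (simp only: e mem_Collect_eq)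
          then show ?thesis by blast
        qed
      qed
      obtain k V where V: "open V" "V \<noteq> {}" "V \<subseteq> Fk k"
        using baire_cover[OF assms(1) clF oU cov] by blast
      define p where "p = int (Suc k)"
      have p0: "p \<noteq> 0" by (simp add: p_def)
      have fixV: "ipow \<sigma> \<tau> (-p) x = x" if "x \<in> V" for x
      proof -
        have "ipow \<sigma> \<tau> p x = x" using V(3) that by (auto simp: Fk_def p_def)
        then have "ipow \<sigma> \<tau> (-p) x = ipow \<sigma> \<tau> (-p) (ipow \<sigma> \<tau> p x)" by simp
        also have "\<dots> = ipow \<sigma> \<tau> (-p + p) x" by (rule ipow_add_pt[OF st ts, symmetric])
        also have "\<dots> = x" by (simp add: ipow_0)
        finally show ?thesis .
      qed
      obtain f where f: "f \<in> A" "f \<noteq> (\<lambda>x. 0)" "\<forall>x\<in>UNIV - V. f x = 0"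
        using assms(7)[rule_format, of V] V(1,2) by blast
      define C where "C = {G \<in> crossed_product A. \<forall>m x. G m x \<noteq> 0 \<longrightarrow> ipow \<sigma> \<tau> (-m) x = x}"
      define Fp where "Fp = (\<lambda>m. if m = p then f else (\<lambda>x. 0::complex))"
      have C_sub: "cp_subalgebra \<sigma> \<tau> A C"
        unfolding cp_subalgebra_def
      proof (intro conjI ballI allI)
        show "C \<subseteq> crossed_product A" by (auto simp: C_def)
        show "(\<lambda>n x. 0) \<in> C" using zA by (simp add: C_def crossed_product_def)
      next
        fix F G assume FC: "F \<in> C" and GC: "G \<in> C"
        then have F: "F \<in> crossed_product A" and G: "G \<in> crossed_product A"
          and PF: "\<forall>m x. F m x \<noteq> 0 \<longrightarrow> ipow \<sigma> \<tau> (-m) x = x"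
          and PG: "\<forall>m x. G m x \<noteq> 0 \<longrightarrow> ipow \<sigma> \<tau> (-m) x = x"
          by (auto simp: C_def)
        have fF: "finite {n. F n \<noteq> (\<lambda>x. 0)}" and fG: "finite {n. G n \<noteq> (\<lambda>x. 0)}"
          using F G by (auto simp: crossed_product_def)
        have "{n. (\<lambda>x. F n x + G n x) \<noteq> (\<lambda>x. 0)} \<subseteq> {n. F n \<noteq> (\<lambda>x. 0)} \<union> {n. G n \<noteq> (\<lambda>x. 0)}"
          by auto
        then have "finite {n. (\<lambda>x. F n x + G n x) \<noteq> (\<lambda>x. 0)}"
          using fF fG by (meson finite_UnI finite_subset)
        moreover have "\<forall>n. (\<lambda>x. F n x + G n x) \<in> A"
        proof
          fix n
          have "F n \<in> A" "G n \<in> A" using F G by (auto simp: crossed_product_def)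
          then show "(\<lambda>x. F n x + G n x) \<in> A" by (rule addA[rule_format])
        qed
        moreover have "\<forall>m x. F m x + G m x \<noteq> 0 \<longrightarrow> ipow \<sigma> \<tau> (-m) x = x"
        proof (intro allI impI)
          fix m x assume "F m x + G m x \<noteq> 0"
          then have "F m x \<noteq> 0 \<or> G m x \<noteq> 0" by auto
          then show "ipow \<sigma> \<tau> (-m) x = x" using PF PG by blast
        qed
        ultimately show "(\<lambda>n x. F n x + G n x) \<in> C" by (simp add: C_def crossed_product_def)
        have "cp_mult \<sigma> \<tau> F G \<in> crossed_product A" by (rule cp_mult_cp[OF sub st ts p1 m1 F G])
        moreover have "\<forall>k x. cp_mult \<sigma> \<tau> F G k x \<noteq> 0 \<longrightarrow> ipow \<sigma> \<tau> (-k) x = x"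
        proof (intro allI impI)
          fix k x assume "cp_mult \<sigma> \<tau> F G k x \<noteq> 0"
          then have "(\<Sum>m\<in>{m. F m \<noteq> (\<lambda>x. 0)}. F m x * G (k-m) x) \<noteq> 0"
            using conv_form[OF PF] by simp
          then obtain m where m: "F m x * G (k-m) x \<noteq> 0"
            using sum.not_neutral_contains_not_neutral by blast
          then have f0: "F m x \<noteq> 0" and g0: "G (k-m) x \<noteq> 0" by auto
          have a: "ipow \<sigma> \<tau> (-m) x = x" using PF f0 by blast
          have b: "ipow \<sigma> \<tau> (-(k-m)) x = x" using PG g0 by blast
          have e: "-k = -m + -(k-m)" by simp
          have "ipow \<sigma> \<tau> (-k) x = ipow \<sigma> \<tau> (-m) (ipow \<sigma> \<tau> (-(k-m)) x)"
            unfolding e by (rule ipow_add_pt[OF st ts])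
          then show "ipow \<sigma> \<tau> (-k) x = x" using a b by simp
        qed
        ultimately show "cp_mult \<sigma> \<tau> F G \<in> C" by (simp add: C_def)
      next
        fix c :: complex and F assume FC: "F \<in> C"
        then have F: "F \<in> crossed_product A"
          and PF: "\<forall>m x. F m x \<noteq> 0 \<longrightarrow> ipow \<sigma> \<tau> (-m) x = x"
          by (auto simp: C_def)
        have fF: "finite {n. F n \<noteq> (\<lambda>x. 0)}" using F by (auto simp: crossed_product_def)
        have "{n. (\<lambda>x. c * F n x) \<noteq> (\<lambda>x. 0)} \<subseteq> {n. F n \<noteq> (\<lambda>x. 0)}" by auto
        then have "finite {n. (\<lambda>x. c * F n x) \<noteq> (\<lambda>x. 0)}" using fF by (rule finite_subset)
        moreover have "\<forall>n. (\<lambda>x. c * F n x) \<in> A"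
        proof
          fix n
          have "F n \<in> A" using F by (auto simp: crossed_product_def)
          then show "(\<lambda>x. c * F n x) \<in> A" by (rule smulA[rule_format])
        qed
        moreover have "\<forall>m x. c * F m x \<noteq> 0 \<longrightarrow> ipow \<sigma> \<tau> (-m) x = x" using PF by simp
        ultimately show "(\<lambda>n x. c * F n x) \<in> C" by (simp add: C_def crossed_product_def)
      qed
      have C_comm: "cp_commutative \<sigma> \<tau> C"
        unfolding cp_commutative_def
      proof (intro ballI)
        fix F G assume FC: "F \<in> C" and GC: "G \<in> C"
        then have F: "F \<in> crossed_product A" and G: "G \<in> crossed_product A"
          and PF: "\<forall>m x. F m x \<noteq> 0 \<longrightarrow> ipow \<sigma> \<tau> (-m) x = x"
          and PG: "\<forall>m x. G m x \<noteq> 0 \<longrightarrow> ipow \<sigma> \<tau> (-m) x = x"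
          by (auto simp: C_def)
        have fF: "finite {n. F n \<noteq> (\<lambda>x. 0)}" and fG: "finite {n. G n \<noteq> (\<lambda>x. 0)}"
          using F G by (auto simp: crossed_product_def)
        show "cp_mult \<sigma> \<tau> F G = cp_mult \<sigma> \<tau> G F"
          by (rule ext, rule ext) (simp only: conv_form[OF PF] conv_form[OF PG] conv_comm[OF fF fG])
      qed
      have embC: "cp_embed ` A \<subseteq> C"
      proof
        fix G assume "G \<in> cp_embed ` A"
        then obtain a where a: "a \<in> A" "G = cp_embed a" by blast
        then show "G \<in> C" using emb_cp[OF a(1)]
          by (auto simp: C_def cp_embed_def ipow_0 split: if_splits)
      qed
      have FpC: "Fp \<in> C"
      proof -
        have "{n. Fp n \<noteq> (\<lambda>x. 0)} \<subseteq> {p}" by (auto simp: Fp_def)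
        then have "finite {n. Fp n \<noteq> (\<lambda>x. 0)}" by (rule finite_subset) simp
        moreover have "\<forall>n. Fp n \<in> A" using f(1) zA by (simp add: Fp_def)
        moreover have "\<forall>m x. Fp m x \<noteq> 0 \<longrightarrow> ipow \<sigma> \<tau> (-m) x = x"
          using f(3) fixV by (auto simp: Fp_def split: if_splits)
        ultimately show ?thesis by (simp add: C_def crossed_product_def)
      qed
      have "Fp \<notin> cp_embed ` A"
      proof
        assume "Fp \<in> cp_embed ` A"
        then obtain a where "Fp = cp_embed a" by blast
        then have "Fp p = (\<lambda>x. 0)" using p0 by (simp add: cp_embed_def)
        then show False using f(2) by (simp add: Fp_def)
      qed
      then have "C \<noteq> cp_embed ` A" using FpC by blast
      moreover have "\<forall>C. cp_subalgebra \<sigma> \<tau> A C \<and> cp_commutative \<sigma> \<tau> C \<and> cp_embed ` A \<subseteq> C \<longrightarrow> C = cp_embed ` A"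
        using max unfolding maximal_abelian_def by (elim conjE)
      ultimately show False using C_sub C_comm embC by blast
    qed
  next
    assume dense: "closure (Per_inf \<sigma> \<tau>) = UNIV"
    show "maximal_abelian \<sigma> \<tau> A (cp_embed ` A)"
      unfolding maximal_abelian_def
    proof (intro conjI allI impI emb_sub emb_comm)
      fix C assume asm: "cp_subalgebra \<sigma> \<tau> A C \<and> cp_commutative \<sigma> \<tau> C \<and> cp_embed ` A \<subseteq> C"
      then have Csub: "C \<subseteq> crossed_product A" and Ccomm: "cp_commutative \<sigma> \<tau> C"
        and incl: "cp_embed ` A \<subseteq> C"
        by (auto simp: cp_subalgebra_def)
      have "C \<subseteq> cp_embed ` A"
      proof
        fix G assume GC: "G \<in> C"
        then have G: "G \<in> crossed_product A" using Csub by blast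
        have fG: "finite {n. G n \<noteq> (\<lambda>x. 0)}" and GA: "\<forall>n. G n \<in> A"
          using G by (auto simp: crossed_product_def)
        have zk: "G k = (\<lambda>x. 0)" if k: "k \<noteq> 0" for k
        proof
          fix y
          have zP: "\<forall>x\<in>Per_inf \<sigma> \<tau>. G k x = 0"
          proof
            fix x assume "x \<in> Per_inf \<sigma> \<tau>"
            then have "ipow \<sigma> \<tau> (-k) x \<noteq> x" using k by (simp add: Per_inf_def)
            then obtain a where a: "a \<in> A" "a (ipow \<sigma> \<tau> (-k) x) \<noteq> a x" using sep by blast
            have "cp_embed a \<in> C" using incl a(1) by blast
            have "cp_mult \<sigma> \<tau> G (cp_embed a) = cp_mult \<sigma> \<tau> (cp_embed a) G"
              by (rule Ccomm[unfolded cp_commutative_def, rule_format, OF GC \<open>cp_embed a \<in> C\<close>])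
            then have "cp_mult \<sigma> \<tau> G (cp_embed a) k x = cp_mult \<sigma> \<tau> (cp_embed a) G k x" by simp
            then have "G k x * a (ipow \<sigma> \<tau> (-k) x) = a x * G k x"
              by (simp add: mult_embed_right[OF fG] mult_embed_left)
            then have "G k x * (a (ipow \<sigma> \<tau> (-k) x) - a x) = 0" by (simp add: algebra_simps)
            then show "G k x = 0" using a(2) by simp
          qed
          have cG: "continuous_on UNIV (G k)" using GA AC by (auto simp: CX_def)
          show "G k y = 0" by (rule zero_dense[OF cG dense zP])
        qed
        have "G = cp_embed (G 0)"
          by (rule ext) (simp add: cp_embed_def zk)
        then show "G \<in> cp_embed ` A" using GA by (metis image_eqI)
      qed
      then show "C = cp_embed ` A" using incl by blast
    qed
  qed
qed

end
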